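(* Let $m,n,k$ be positive integers, $A\in\mathbb{R}^{m\times n}$ satisfying the $(2k+1)$-RIP, $x^*\in\mathbb{R}^n$ with support $S^*$, $|S^*|\le k$, $e\in\mathbb{R}^m$, $y=Ax^*+e$. For every initialization $\mathcal{X}^0$, every $\eta>0$ and every $t\in\mathbb{N}$, the SEA iterates satisfy $$\|(x^t-x^* )_{S^t}\|_2\le\frac{\delta_{2k}}{1-\delta_k}\frac{\|u^t\|_2}{\eta}+\frac{\sqrt{1+\delta_k}}{1-\delta_k}\|e\|_2.$$
   Context: For $l\in\{1,\dots,n\}$, the restricted isometry constant $\delta_l$ of $A$ is the smallest $\delta\ge0$ such that $(1-\delta)\|x\|_2^2\le\|Ax\|_2^2\le(1+\delta)\|x\|_2^2$ for all $x$ with at most $l$ nonzero entries; $A$ satisfies the $l$-RIP if $\delta_l<1$. $S^*=\{i:x^*_i\neq0\}$. For $v\in\mathbb{R}^n$, $\mathrm{largest}_k(v)$ is the set of indices of the $k$ entries of $v$ with largest absolute value (ties broken by selecting the highest indices). For $S\subseteq\{1,\dots,n\}$, $A_S$ is the submatrix of columns indexed by $S$, $v_S$ the restriction of a vector to $S$, $A_S^\dagger$ the Moore–Penrose pseudoinverse of $A_S$. SEA with initialization $\mathcal{X}^0$ and step size $\eta$ generates, for $t=0,1,2,\dots$: $S^t=\mathrm{largest}_k(\mathcal{X}^t)$; $x^t_i=0$ for $i\notin S^t$ and $x^t_{S^t}=A_{S^t}^\dagger y$; $\mathcal{X}^{t+1}=\mathcal{X}^t-\eta A^T(Ax^t-y)$.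 The oracle direction is $u^t_i=-\eta x^*_i$ if $i\in S^*\setminus S^t$ and $u^t_i=0$ otherwise. *)

theory Defs
  imports Complex_Main
begin

text \<open>Vectors in R^n are functions nat \<Rightarrow> real, only the entries with
index in {0..<n} matter. An m\<times>n matrix is a function nat \<Rightarrow> nat \<Rightarrow> real (row, column),
only entries in {0..<m}\<times>{0..<n} matter. Submatrices and pseudoinverses are handled
with matrices whose rows/columns are indexed by arbitrary finite index sets.\<close>

definition vnorm :: "nat set \<Rightarrow> (nat \<Rightarrow> real) \<Rightarrow> real" where
  "vnorm I v = sqrt (\<Sum>i\<in>I. (v i)\<^sup>2)"

definition mulvec :: "nat set \<Rightarrow> nat set \<Rightarrow> (nat \<Rightarrow> nat \<Rightarrow> real) \<Rightarrow> (nat \<Rightarrow> real) \<Rightarrow> (nat \<Rightarrow> real)" where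
  "mulvec R C M v = (\<lambda>i. if i \<in> R then (\<Sum>j\<in>C. M i j * v j) else 0)"

definition mrestrict :: "nat set \<Rightarrow> nat set \<Rightarrow> (nat \<Rightarrow> nat \<Rightarrow> real) \<Rightarrow> (nat \<Rightarrow> nat \<Rightarrow> real)" where
  "mrestrict R C M = (\<lambda>i j. if i \<in> R \<and> j \<in> C then M i j else 0)"

definition matmul :: "nat set \<Rightarrow> nat set \<Rightarrow> nat set \<Rightarrow> (nat \<Rightarrow> nat \<Rightarrow> real) \<Rightarrow> (nat \<Rightarrow> nat \<Rightarrow> real) \<Rightarrow> (nat \<Rightarrow> nat \<Rightarrow> real)" where
  "matmul R K C M N = (\<lambda>i j. if i \<in> R \<and> j \<in> C then (\<Sum>l\<in>K. M i l * N l j) else 0)"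

definition pinv :: "nat set \<Rightarrow> nat set \<Rightarrow> (nat \<Rightarrow> nat \<Rightarrow> real) \<Rightarrow> (nat \<Rightarrow> nat \<Rightarrow> real)" where
  "pinv R C M = (THE G. mrestrict C R G = G \<and>
      matmul R R C (matmul R C R M G) M = mrestrict R C M \<and>
      matmul C C R (matmul C R C G M) G = G \<and>
      (\<forall>i\<in>R. \<forall>j\<in>R. matmul R C R M G i j = matmul R C R M G j i) \<and>
      (\<forall>i\<in>C. \<forall>j\<in>C. matmul C R C G M i j = matmul C R C G M j i))"

definition rip_const :: "nat \<Rightarrow> nat \<Rightarrow> (nat \<Rightarrow> nat \<Rightarrow> real) \<Rightarrow> nat \<Rightarrow> real" where
  "rip_const m n A l = Inf {\<delta>. \<delta> \<ge> 0 \<and>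
      (\<forall>x. card {i\<in>{0..<n}. x i \<noteq> 0} \<le> l \<longrightarrow>
         (1 - \<delta>) * (vnorm {0..<n} x)\<^sup>2 \<le> (vnorm {0..<m} (mulvec {0..<m} {0..<n} A x))\<^sup>2 \<and>
         (vnorm {0..<m} (mulvec {0..<m} {0..<n} A x))\<^sup>2 \<le> (1 + \<delta>) * (vnorm {0..<n} x)\<^sup>2)}"

text \<open>largest_k(v): indices of the k entries of largest absolute value, ties broken
by preferring higher indices. j "beats" i if |v j| > |v i|, or equal and j > i.\<close>
definition largest :: "nat \<Rightarrow> nat \<Rightarrow> (nat \<Rightarrow> real) \<Rightarrow> nat set" where
  "largest n k v = {i\<in>{0..<n}.
      card {j\<in>{0..<n}. \<bar>v j\<bar> > \<bar>v i\<bar> \<or> (\<bar>v j\<bar> = \<bar>v i\<bar> \<and> j > i)} < k}"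

definition sea_S :: "nat \<Rightarrow> nat \<Rightarrow> (nat \<Rightarrow> real) \<Rightarrow> nat set" where
  "sea_S n k X = largest n k X"

definition sea_x :: "nat \<Rightarrow> nat \<Rightarrow> nat \<Rightarrow> (nat \<Rightarrow> nat \<Rightarrow> real) \<Rightarrow> (nat \<Rightarrow> real) \<Rightarrow> (nat \<Rightarrow> real) \<Rightarrow> (nat \<Rightarrow> real)" where
  "sea_x m n k A y X = (let S = sea_S n k X in
     mulvec S {0..<m} (pinv {0..<m} S (mrestrict {0..<m} S A)) y)"

primrec sea_X :: "nat \<Rightarrow> nat \<Rightarrow> nat \<Rightarrow> (nat \<Rightarrow> nat \<Rightarrow> real) \<Rightarrow> (nat \<Rightarrow> real) \<Rightarrow> real \<Rightarrow> (nat \<Rightarrow> real) \<Rightarrow> nat \<Rightarrow> (nat \<Rightarrow> real)" where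
  "sea_X m n k A y \<eta> X0 0 = X0"
| "sea_X m n k A y \<eta> X0 (Suc t) =
     (let X = sea_X m n k A y \<eta> X0 t; x = sea_x m n k A y X in
      (\<lambda>i. X i - \<eta> * (\<Sum>r\<in>{0..<m}. A r i * ((\<Sum>j\<in>{0..<n}. A r j * x j) - y r))))"

end

theory Submission
  imports Defs "HOL-Library.Function_Algebras" "HOL-Analysis.Convex"
begin


definition sc :: "real \<Rightarrow> (nat \<Rightarrow> real) \<Rightarrow> (nat \<Rightarrow> real)" where
  "sc c f = (\<lambda>i. c * f i)"

interpretation fv: vector_space sc
  by unfold_locales (auto simp: sc_def fun_eq_iff algebra_simps)

definition dl :: "nat \<Rightarrow> nat \<Rightarrow> real" where
  "dl i = (\<lambda>j. if j = i then 1 else 0)"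

lemma sum_fun_app: "(\<Sum>x\<in>A. g x) (j::nat) = (\<Sum>x\<in>A. g x j)" for g :: "'a \<Rightarrow> nat \<Rightarrow> real"
  by (induction A rule: infinite_finite_induct) auto

lemma span_dl:
  assumes "finite C"
  shows "fv.span (dl ` C) = {v. \<forall>i. i \<notin> C \<longrightarrow> v i = 0}"
proof
  show "fv.span (dl ` C) \<subseteq> {v. \<forall>i. i \<notin> C \<longrightarrow> v i = 0}"
    by (rule fv.span_minimal) (auto simp: dl_def fv.subspace_def sc_def)
  show "{v. \<forall>i. i \<notin> C \<longrightarrow> v i = 0} \<subseteq> fv.span (dl ` C)"
  proof
    fix v :: "nat \<Rightarrow> real" assume v: "v \<in> {v. \<forall>i. i \<notin> C \<longrightarrow> v i = 0}"
    have "v = (\<Sum>i\<in>C. sc (v i) (dl i))"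
    proof
      fix j
      show "v j = (\<Sum>i\<in>C. sc (v i) (dl i)) j"
        using v assms by (auto simp: sum_fun_app sc_def dl_def if_distrib sum.delta cong: if_cong)
    qed
    also have "\<dots> \<in> fv.span (dl ` C)"
      by (intro fv.span_sum fv.span_scale fv.span_base) auto
    finally show "v \<in> fv.span (dl ` C)" .
  qed
qed

lemma indep_dl: "fv.independent (dl ` C)"
proof
  assume "fv.dependent (dl ` C)"
  then obtain a where a: "a \<in> dl ` C" "a \<in> fv.span (dl ` C - {a})"
    unfolding fv.dependent_def by blast
  then obtain i where i: "a = dl i" by auto
  have "fv.span (dl ` C - {a}) \<subseteq> {v. v i = 0}"
    by (rule fv.span_minimal) (auto simp: dl_def fv.subspace_def sc_def i)
  with a i show False by (auto simp: dl_def)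
qed

lemma inj_dl: "inj dl"
  by (rule injI) (metis dl_def zero_neq_one)

lemma lin_surj:
  fixes C :: "nat set" and B :: "nat \<Rightarrow> nat \<Rightarrow> real" and b :: "nat \<Rightarrow> real"
  assumes fin: "finite C"
   and inj: "\<And>v. (\<forall>i. i \<notin> C \<longrightarrow> v i = 0) \<Longrightarrow> (\<forall>i\<in>C. (\<Sum>j\<in>C. B i j * v j) = 0) \<Longrightarrow> v = 0"
  shows "\<exists>v. (\<forall>i. i \<notin> C \<longrightarrow> v i = 0) \<and> (\<forall>i\<in>C. (\<Sum>j\<in>C. B i j * v j) = b i)"
proof -
  define V where "V = {v::nat\<Rightarrow>real. \<forall>i. i \<notin> C \<longrightarrow> v i = 0}"
  define E where "E = dl ` C"
  define f where "f = (\<lambda>v::nat\<Rightarrow>real. \<lambda>i. if i \<in> C then (\<Sum>j\<in>C. B i j * v j) else 0)"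
  have spanE: "fv.span E = V" unfolding E_def V_def using span_dl[OF fin] .
  have mh: "module_hom sc sc f"
    unfolding module_hom_def module_hom_axioms_def
    by (auto simp: fv.module_axioms f_def sc_def fun_eq_iff sum.distrib sum_distrib_left algebra_simps)
  interpret lf: module_hom sc sc f by (rule mh)
  have finj: "inj_on f V"
  proof (rule inj_onI)
    fix x y assume xy: "x \<in> V" "y \<in> V" "f x = f y"
    have "(\<lambda>i. x i - y i) = 0"
    proof (rule inj)
      show "\<forall>i. i \<notin> C \<longrightarrow> x i - y i = 0" using xy by (auto simp: V_def)
      show "\<forall>i\<in>C. (\<Sum>j\<in>C. B i j * (x j - y j)) = 0"
      proof
        fix i assume "i \<in> C"
        have "f x i = f y i" using xy by simp
        then show "(\<Sum>j\<in>C. B i j * (x j - y j)) = 0"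
          using \<open>i \<in> C\<close> by (simp add: f_def right_diff_distrib sum_subtractf)
      qed
    qed
    then show "x = y" by (auto simp: fun_eq_iff)
  qed
  have indE: "fv.independent E" unfolding E_def by (rule indep_dl)
  have ind: "fv.independent (f ` E)"
    using lf.independent_injective_image[OF indE] finj spanE by simp
  have cardE: "card E = card C" unfolding E_def using inj_dl by (simp add: card_image inj_on_subset)
  have cardfE: "card (f ` E) = card C"
  proof -
    have "inj_on f E" using finj spanE fv.span_superset[of E] by (metis inj_on_subset)
    then show ?thesis using cardE by (simp add: card_image)
  qed
  have finE: "finite E" unfolding E_def using fin by simp
  have VE: "V \<subseteq> fv.span (f ` E)"
  proof
    fix w assume w: "w \<in> V"
    show "w \<in> fv.span (f ` E)"
    proof (rule ccontr)
      assume nw: "w \<notin> fv.span (f ` E)"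
      then have i2: "fv.independent (insert w (f ` E))" using fv.independent_insertI ind by blast
      have "insert w (f ` E) \<subseteq> fv.span E"
      proof -
        have "f ` E \<subseteq> V" using spanE fv.span_superset[of E] by (auto simp: f_def V_def)
        then show ?thesis using w spanE by auto
      qed
      from fv.independent_span_bound[OF finE i2 this]
      have "card (insert w (f ` E)) \<le> card E" by simp
      moreover have "w \<notin> f ` E" using nw fv.span_superset by blast
      moreover have "finite (f ` E)" using finE by simp
      ultimately show False using cardE cardfE by simp
    qed
  qed
  define b' where "b' = (\<lambda>i. if i \<in> C then b i else 0)"
  have "b' \<in> V" by (simp add: b'_def V_def)
  with VE lf.span_image spanE obtain v where v: "v \<in> V" "b' = f v" by auto
  show ?thesis
  proof (intro exI conjI)
    show "\<forall>i. i \<notin> C \<longrightarrow> v i = 0" using v by (simp add: V_def)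
    show "\<forall>i\<in>C. (\<Sum>j\<in>C. B i j * v j) = b i"
    proof
      fix i assume "i \<in> C"
      have "b' i = f v i" using v by simp
      then show "(\<Sum>j\<in>C. B i j * v j) = b i" using \<open>i \<in> C\<close> by (simp add: b'_def f_def)
    qed
  qed
qed



definition ripset :: "nat \<Rightarrow> nat \<Rightarrow> (nat \<Rightarrow> nat \<Rightarrow> real) \<Rightarrow> nat \<Rightarrow> real set" where
  "ripset m n A l = {\<delta>. \<delta> \<ge> 0 \<and>
      (\<forall>x. card {i\<in>{0..<n}. x i \<noteq> 0} \<le> l \<longrightarrow>
         (1 - \<delta>) * (vnorm {0..<n} x)\<^sup>2 \<le> (vnorm {0..<m} (mulvec {0..<m} {0..<n} A x))\<^sup>2 \<and>
         (vnorm {0..<m} (mulvec {0..<m} {0..<n} A x))\<^sup>2 \<le> (1 + \<delta>) * (vnorm {0..<n} x)\<^sup>2)}"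

lemma rip_const_eq: "rip_const m n A l = Inf (ripset m n A l)"
  by (simp add: rip_const_def ripset_def)

lemma vnorm_sq: "finite I \<Longrightarrow> (vnorm I v)\<^sup>2 = (\<Sum>i\<in>I. (v i)\<^sup>2)"
  unfolding vnorm_def by (simp add: sum_nonneg)

lemma vnorm_nonneg: "vnorm I v \<ge> 0"
  unfolding vnorm_def by (simp add: sum_nonneg)

lemma mulvec_sq: "(vnorm {0..<m} (mulvec {0..<m} {0..<n} A x))\<^sup>2
   = (\<Sum>r\<in>{0..<m}. (\<Sum>j\<in>{0..<n}. A r j * x j)\<^sup>2)"
  by (simp add: vnorm_sq mulvec_def)

lemma ripset_ne: "ripset m n A l \<noteq> {}"
proof -
  define F where "F = (\<Sum>r\<in>{0..<m}. \<Sum>j\<in>{0..<n}. (A r j)\<^sup>2)"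
  have F0: "F \<ge> 0" unfolding F_def by (intro sum_nonneg) auto
  have key: "(1 - (1 + F)) * (vnorm {0..<n} x)\<^sup>2 \<le> (vnorm {0..<m} (mulvec {0..<m} {0..<n} A x))\<^sup>2 \<and>
     (vnorm {0..<m} (mulvec {0..<m} {0..<n} A x))\<^sup>2 \<le> (1 + (1 + F)) * (vnorm {0..<n} x)\<^sup>2" for x
  proof
    have N0: "(vnorm {0..<n} x)\<^sup>2 \<ge> 0" by simp
    have AN0: "(vnorm {0..<m} (mulvec {0..<m} {0..<n} A x))\<^sup>2 \<ge> 0" by simp
    show "(1 - (1 + F)) * (vnorm {0..<n} x)\<^sup>2 \<le> (vnorm {0..<m} (mulvec {0..<m} {0..<n} A x))\<^sup>2"
    proof -
      have h1: "F * (vnorm {0..<n} x)\<^sup>2 \<ge> 0" using F0 N0 by simp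
      have h2: "(1 - (1 + F)) * (vnorm {0..<n} x)\<^sup>2 = - (F * (vnorm {0..<n} x)\<^sup>2)" by simp
      show ?thesis unfolding h2 using h1 AN0 by linarith
    qed
    have "(vnorm {0..<m} (mulvec {0..<m} {0..<n} A x))\<^sup>2
       = (\<Sum>r\<in>{0..<m}. (\<Sum>j\<in>{0..<n}. A r j * x j)\<^sup>2)" by (rule mulvec_sq)
    also have "\<dots> \<le> (\<Sum>r\<in>{0..<m}. (\<Sum>j\<in>{0..<n}. (A r j)\<^sup>2) * (\<Sum>j\<in>{0..<n}. (x j)\<^sup>2))"
      by (intro sum_mono Cauchy_Schwarz_ineq_sum)
    also have "\<dots> = F * (vnorm {0..<n} x)\<^sup>2"
      by (simp add: F_def vnorm_sq sum_distrib_right)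
    also have "\<dots> \<le> (1 + (1 + F)) * (vnorm {0..<n} x)\<^sup>2"
      using N0 F0 by (intro mult_right_mono) auto
    finally show "(vnorm {0..<m} (mulvec {0..<m} {0..<n} A x))\<^sup>2 \<le> (1 + (1 + F)) * (vnorm {0..<n} x)\<^sup>2" .
  qed
  have "1 + F \<in> ripset m n A l"
    unfolding ripset_def using F0 key by simp
  then show ?thesis by blast
qed

lemma ripset_bdd: "bdd_below (ripset m n A l)"
  by (rule bdd_belowI[of _ 0]) (auto simp: ripset_def)

lemma rip_nonneg: "rip_const m n A l \<ge> 0"
  unfolding rip_const_eq
  by (rule cInf_greatest[OF ripset_ne]) (auto simp: ripset_def)

lemma rip_mono: "l \<le> l' \<Longrightarrow> rip_const m n A l \<le> rip_const m n A l'"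
  unfolding rip_const_eq
  by (rule cInf_superset_mono[OF ripset_ne ripset_bdd]) (auto simp: ripset_def)

lemma rip_prop:
  assumes "card {i\<in>{0..<n}. x i \<noteq> 0} \<le> l"
  shows "(1 - rip_const m n A l) * (vnorm {0..<n} x)\<^sup>2 \<le> (vnorm {0..<m} (mulvec {0..<m} {0..<n} A x))\<^sup>2 \<and>
         (vnorm {0..<m} (mulvec {0..<m} {0..<n} A x))\<^sup>2 \<le> (1 + rip_const m n A l) * (vnorm {0..<n} x)\<^sup>2"
proof -
  define a where "a = (vnorm {0..<n} x)\<^sup>2"
  define b where "b = (vnorm {0..<m} (mulvec {0..<m} {0..<n} A x))\<^sup>2"
  have a0: "a \<ge> 0" and b0: "b \<ge> 0" by (auto simp: a_def b_def)
  have mem: "\<And>d. d \<in> ripset m n A l \<Longrightarrow> (1 - d) * a \<le> b \<and> b \<le> (1 + d) * a"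
    using assms unfolding ripset_def a_def b_def by blast
  obtain d0 where d0: "d0 \<in> ripset m n A l" using ripset_ne by blast
  show ?thesis
  proof (cases "a = 0")
    case True
    with mem[OF d0] b0 show ?thesis by (simp add: a_def b_def)
  next
    case False
    with a0 have apos: "a > 0" by simp
    have l1: "(a - b) / a \<le> rip_const m n A l"
      unfolding rip_const_eq
    proof (rule cInf_greatest[OF ripset_ne])
      fix d assume "d \<in> ripset m n A l"
      from mem[OF this] apos show "(a - b) / a \<le> d" by (simp add: divide_le_eq algebra_simps)
    qed
    have l2: "(b - a) / a \<le> rip_const m n A l"
      unfolding rip_const_eq
    proof (rule cInf_greatest[OF ripset_ne])
      fix d assume "d \<in> ripset m n A l"
      from mem[OF this] apos show "(b - a) / a \<le> d" by (simp add: divide_le_eq algebra_simps)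
    qed
    from l1 l2 apos have "(1 - rip_const m n A l) * a \<le> b \<and> b \<le> (1 + rip_const m n A l) * a"
      by (simp add: divide_le_eq algebra_simps)
    then show ?thesis by (simp add: a_def b_def)
  qed
qed



definition mm :: "nat set \<Rightarrow> (nat \<Rightarrow> nat \<Rightarrow> real) \<Rightarrow> (nat \<Rightarrow> nat \<Rightarrow> real) \<Rightarrow> (nat \<Rightarrow> nat \<Rightarrow> real)" where
  "mm K X Y = (\<lambda>i j. \<Sum>l\<in>K. X i l * Y l j)"

lemma mm_assoc: "finite K1 \<Longrightarrow> finite K2 \<Longrightarrow> mm K2 (mm K1 X Y) Z = mm K1 X (mm K2 Y Z)"
  unfolding mm_def
  by (auto simp: fun_eq_iff sum_distrib_left sum_distrib_right mult.assoc intro: sum.swap)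

definition PenroseP where
  "PenroseP R C M G \<longleftrightarrow> (mrestrict C R G = G \<and>
      matmul R R C (matmul R C R M G) M = mrestrict R C M \<and>
      matmul C C R (matmul C R C G M) G = G \<and>
      (\<forall>i\<in>R. \<forall>j\<in>R. matmul R C R M G i j = matmul R C R M G j i) \<and>
      (\<forall>i\<in>C. \<forall>j\<in>C. matmul C R C G M i j = matmul C R C G M j i))"

lemma pinv_PenroseP: "pinv R C M = (THE G. PenroseP R C M G)"
  unfolding pinv_def PenroseP_def ..

lemma PenroseP_iff:
  "PenroseP R C (mrestrict R C A) G \<longleftrightarrow>
     (\<forall>i j. \<not> (i \<in> C \<and> j \<in> R) \<longrightarrow> G i j = 0) \<and>
     (\<forall>i\<in>R. \<forall>j\<in>C. mm R (mm C A G) A i j = A i j) \<and>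
     (\<forall>i\<in>C. \<forall>j\<in>R. mm C (mm R G A) G i j = G i j) \<and>
     (\<forall>i\<in>R. \<forall>j\<in>R. mm C A G i j = mm C A G j i) \<and>
     (\<forall>i\<in>C. \<forall>j\<in>C. mm R G A i j = mm R G A j i)"
  (is "?L \<longleftrightarrow> ?a \<and> ?b \<and> ?c \<and> ?d \<and> ?e")
proof -
  have 1: "mrestrict C R G = G \<longleftrightarrow> ?a"
    by (auto simp: mrestrict_def fun_eq_iff)
  have 2: "?a \<Longrightarrow> matmul R R C (matmul R C R (mrestrict R C A) G) (mrestrict R C A) = mrestrict R C (mrestrict R C A) \<longleftrightarrow> ?b"
    by (auto simp: matmul_def mrestrict_def mm_def fun_eq_iff)
  have 3: "?a \<Longrightarrow> matmul C C R (matmul C R C G (mrestrict R C A)) G = G \<longleftrightarrow> ?c"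
    by (auto simp: matmul_def mrestrict_def mm_def fun_eq_iff)
  have 4: "(\<forall>i\<in>R. \<forall>j\<in>R. matmul R C R (mrestrict R C A) G i j = matmul R C R (mrestrict R C A) G j i) \<longleftrightarrow> ?d"
    by (auto simp: matmul_def mrestrict_def mm_def)
  have 5: "(\<forall>i\<in>C. \<forall>j\<in>C. matmul C R C G (mrestrict R C A) i j = matmul C R C G (mrestrict R C A) j i) \<longleftrightarrow> ?e"
    by (auto simp: matmul_def mrestrict_def mm_def)
  show ?thesis unfolding PenroseP_def using 1 2 3 4 5 by blast
qed


lemma Penrose_BG:
  assumes fR: "finite R" and fC: "finite C" and P: "PenroseP R C (mrestrict R C A) G"
    and i: "i \<in> C" and r: "r \<in> R"
  shows "mm C (mm R (\<lambda>i r. A r i) A) G i r = A r i"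
proof -
  from P have b: "\<forall>i\<in>R. \<forall>j\<in>C. mm R (mm C A G) A i j = A i j"
    and d: "\<forall>i\<in>R. \<forall>j\<in>R. mm C A G i j = mm C A G j i"
    unfolding PenroseP_iff by blast+
  have "mm C (mm R (\<lambda>i r. A r i) A) G i r = mm R (\<lambda>i r. A r i) (mm C A G) i r"
    using mm_assoc[OF fR fC] by simp
  also have "\<dots> = (\<Sum>l\<in>R. mm C A G r l * A l i)"
    unfolding mm_def using d r by (intro sum.cong) (auto simp: mult.commute mm_def)
  also have "\<dots> = mm R (mm C A G) A r i" by (simp add: mm_def)
  also have "\<dots> = A r i" using b r i by blast
  finally show ?thesis .
qed

lemma pinv_BG:
  fixes R C :: "nat set" and A :: "nat \<Rightarrow> nat \<Rightarrow> real"
  assumes fR: "finite R" and fC: "finite C"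
    and injB: "\<And>v. (\<forall>i. i \<notin> C \<longrightarrow> v i = 0) \<Longrightarrow>
        (\<forall>i\<in>C. (\<Sum>j\<in>C. (\<Sum>r\<in>R. A r i * A r j) * v j) = 0) \<Longrightarrow> v = 0"
  shows "\<forall>i\<in>C. \<forall>r\<in>R. (\<Sum>j\<in>C. (\<Sum>r'\<in>R. A r' i * A r' j) * pinv R C (mrestrict R C A) j r) = A r i"
proof -
  define B where "B = mm R (\<lambda>i r. A r i) A"
  have Bij: "B i j = (\<Sum>r\<in>R. A r i * A r j)" for i j by (simp add: B_def mm_def)
  have Bsym: "B i j = B j i" for i j unfolding Bij by (simp add: mult.commute)
  have injB': "v = 0" if "\<forall>i. i \<notin> C \<longrightarrow> v i = 0" "\<forall>i\<in>C. (\<Sum>j\<in>C. B i j * v j) = 0" for v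
    using injB that unfolding Bij by blast
  have uniq: "G1 = G2" if G12: "PenroseP R C (mrestrict R C A) G1" "PenroseP R C (mrestrict R C A) G2" for G1 G2
  proof -
    have a1: "\<forall>i j. \<not> (i \<in> C \<and> j \<in> R) \<longrightarrow> G1 i j = 0" using that(1) unfolding PenroseP_iff by blast
    have a2: "\<forall>i j. \<not> (i \<in> C \<and> j \<in> R) \<longrightarrow> G2 i j = 0" using that(2) unfolding PenroseP_iff by blast
    have col: "G1 p r = G2 p r" if r: "r \<in> R" for p r
    proof -
      have "(\<lambda>p. G1 p r - G2 p r) = 0"
      proof (rule injB')
        show "\<forall>i. i \<notin> C \<longrightarrow> G1 i r - G2 i r = 0" using a1 a2 by simp
        show "\<forall>i\<in>C. (\<Sum>j\<in>C. B i j * (G1 j r - G2 j r)) = 0"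
        proof
          fix i assume i: "i \<in> C"
          have "mm C B G1 i r = A r i" "mm C B G2 i r = A r i"
            using Penrose_BG[OF fR fC G12(1) i r] Penrose_BG[OF fR fC G12(2) i r] B_def by auto
          then show "(\<Sum>j\<in>C. B i j * (G1 j r - G2 j r)) = 0"
            by (simp add: mm_def right_diff_distrib sum_subtractf)
        qed
      qed
      then show ?thesis by (simp add: fun_eq_iff)
    qed
    show "G1 = G2"
    proof (rule ext, rule ext)
      fix p r show "G1 p r = G2 p r"
        using col a1 a2 by (cases "p \<in> C \<and> r \<in> R") auto
    qed
  qed
  have "\<forall>r\<in>R. \<exists>v. (\<forall>i. i \<notin> C \<longrightarrow> v i = 0) \<and> (\<forall>i\<in>C. (\<Sum>j\<in>C. B i j * v j) = A r i)"
    using lin_surj[OF fC injB'] by blast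
  then obtain vf where vf: "\<forall>r\<in>R. (\<forall>i. i \<notin> C \<longrightarrow> vf r i = 0) \<and> (\<forall>i\<in>C. (\<Sum>j\<in>C. B i j * vf r j) = A r i)"
    by (rule bchoice[elim_format]) blast
  define G where "G = (\<lambda>i r. if r \<in> R then vf r i else 0)"
  have Ga: "\<forall>i j. \<not> (i \<in> C \<and> j \<in> R) \<longrightarrow> G i j = 0" using vf by (auto simp: G_def)
  have BG: "mm C B G i r = A r i" if "i \<in> C" "r \<in> R" for i r
    using vf that by (simp add: G_def mm_def)
  have Q: "mm R G A p j = (if p = j then 1 else 0)" if p: "p \<in> C" and j: "j \<in> C" for p j
  proof -
    have Z: "(\<lambda>p. if p \<in> C then mm R G A p j - (if p = j then 1 else 0) else 0) = 0"
    proof (rule injB')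
      show "\<forall>i. i \<notin> C \<longrightarrow> (if i \<in> C then mm R G A i j - (if i = j then 1 else 0) else 0) = 0" by simp
      show "\<forall>i\<in>C. (\<Sum>q\<in>C. B i q * (if q \<in> C then mm R G A q j - (if q = j then 1 else 0) else 0)) = 0"
      proof
        fix i assume i: "i \<in> C"
        have "(\<Sum>q\<in>C. B i q * (if q \<in> C then mm R G A q j - (if q = j then 1 else 0) else 0))
            = (\<Sum>q\<in>C. B i q * mm R G A q j - B i q * (if q = j then 1 else 0))"
          by (intro sum.cong refl) (simp add: right_diff_distrib)
        also have "\<dots> = mm C B (mm R G A) i j - B i j"
        proof -
          have "(\<Sum>q\<in>C. B i q * (if q = j then 1 else 0)) = B i j"
            using j fC by (simp add: if_distrib sum.delta cong: if_cong)
          then show ?thesis unfolding sum_subtractf by (simp add: mm_def)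
        qed
        also have "mm C B (mm R G A) i j = mm R (mm C B G) A i j" using mm_assoc[OF fC fR] by simp
        also have "\<dots> = (\<Sum>r\<in>R. A r i * A r j)" unfolding mm_def using BG i
          by (intro sum.cong) (auto simp: mm_def)
        finally show "(\<Sum>q\<in>C. B i q * (if q \<in> C then mm R G A q j - (if q = j then 1 else 0) else 0)) = 0"
          by (simp add: Bij)
      qed
    qed
    have "mm R G A p j - (if p = j then 1 else 0) = 0" using fun_cong[OF Z, of p] p by simp
    then show ?thesis by simp
  qed
  have PG: "PenroseP R C (mrestrict R C A) G"
    unfolding PenroseP_iff
  proof (intro conjI)
    show "\<forall>i j. \<not> (i \<in> C \<and> j \<in> R) \<longrightarrow> G i j = 0" by (rule Ga)
    show "\<forall>i\<in>R. \<forall>j\<in>C. mm R (mm C A G) A i j = A i j"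
    proof (intro ballI)
      fix i j assume i: "i \<in> R" and j: "j \<in> C"
      have "mm R (mm C A G) A i j = mm C A (mm R G A) i j" using mm_assoc[OF fC fR] by simp
      also have "\<dots> = (\<Sum>l\<in>C. A i l * (if l = j then 1 else 0))"
        unfolding mm_def using Q j by (intro sum.cong) (auto simp: mm_def)
      also have "\<dots> = A i j" using j fC by (simp add: if_distrib sum.delta cong: if_cong)
      finally show "mm R (mm C A G) A i j = A i j" .
    qed
    show "\<forall>i\<in>C. \<forall>j\<in>R. mm C (mm R G A) G i j = G i j"
    proof (intro ballI)
      fix i j assume i: "i \<in> C" and j: "j \<in> R"
      have "mm C (mm R G A) G i j = (\<Sum>l\<in>C. (if i = l then 1 else 0) * G l j)"
        unfolding mm_def using Q i by (intro sum.cong) (auto simp: mm_def)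
      also have "\<dots> = G i j" using i fC by (subst sum.cong[OF refl, of _ _ "\<lambda>l. if i = l then G l j else 0"]) (auto simp: sum.delta)
      finally show "mm C (mm R G A) G i j = G i j" .
    qed
    show "\<forall>i\<in>C. \<forall>j\<in>C. mm R G A i j = mm R G A j i"
      using Q by auto
    show "\<forall>i\<in>R. \<forall>j\<in>R. mm C A G i j = mm C A G j i"
    proof (intro ballI)
      fix i j assume i: "i \<in> R" and j: "j \<in> R"
      have e: "mm C A G a b = (\<Sum>l\<in>C. \<Sum>p\<in>C. B l p * G p a * G l b)" if "a \<in> R" for a b
      proof -
        have "mm C A G a b = (\<Sum>l\<in>C. mm C B G l a * G l b)"
          unfolding mm_def using BG that by (intro sum.cong) (auto simp: mm_def)
        then show ?thesis by (simp add: mm_def sum_distrib_right)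
      qed
      have "mm C A G i j = (\<Sum>l\<in>C. \<Sum>p\<in>C. B l p * G p i * G l j)" using e i by blast
      also have "\<dots> = (\<Sum>p\<in>C. \<Sum>l\<in>C. B l p * G p i * G l j)" by (rule sum.swap)
      also have "\<dots> = (\<Sum>p\<in>C. \<Sum>l\<in>C. B p l * G l j * G p i)"
        by (intro sum.cong refl) (metis Bsym mult.commute mult.left_commute)
      also have "\<dots> = mm C A G j i" using e j by simp
      finally show "mm C A G i j = mm C A G j i" .
    qed
  qed
  have "\<exists>!G. PenroseP R C (mrestrict R C A) G" using PG uniq by blast
  then have "PenroseP R C (mrestrict R C A) (pinv R C (mrestrict R C A))"
    unfolding pinv_PenroseP by (rule theI')
  from Penrose_BG[OF fR fC this]
  show ?thesis by (simp add: mm_def)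
qed



lemma card_largest: "card (largest n k v) \<le> k"
proof -
  define bt where "bt = (\<lambda>j i. \<bar>v j\<bar> > \<bar>v i\<bar> \<or> (\<bar>v j\<bar> = \<bar>v i\<bar> \<and> j > i))"
  define rk where "rk = (\<lambda>i. card {j\<in>{0..<n}. bt j i})"
  have L: "largest n k v = {i\<in>{0..<n}. rk i < k}"
    unfolding largest_def rk_def bt_def by simp
  have lt: "rk i' < rk i" if "bt i' i" "i' < n" for i i'
  proof -
    have "{j\<in>{0..<n}. bt j i'} \<subset> {j\<in>{0..<n}. bt j i}"
    proof
      show "{j\<in>{0..<n}. bt j i'} \<subseteq> {j\<in>{0..<n}. bt j i}"
        using that unfolding bt_def by auto
      show "{j\<in>{0..<n}. bt j i'} \<noteq> {j\<in>{0..<n}. bt j i}"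
        using that unfolding bt_def by auto
    qed
    then show ?thesis unfolding rk_def by (intro psubset_card_mono) auto
  qed
  have inj: "inj_on rk {0..<n}"
  proof (rule inj_onI)
    fix i i' assume "i \<in> {0..<n}" "i' \<in> {0..<n}" "rk i = rk i'"
    moreover have "i \<noteq> i' \<Longrightarrow> bt i' i \<or> bt i i'" unfolding bt_def by auto
    ultimately show "i = i'" using lt by (metis atLeastLessThan_iff less_irrefl)
  qed
  have "card (largest n k v) = card (rk ` largest n k v)"
    using inj L by (intro card_image[symmetric]) (auto intro: inj_on_subset)
  also have "\<dots> \<le> card {..<k}"
    using L by (intro card_mono) auto
  finally show ?thesis by simp
qed

lemma largest_sub: "largest n k v \<subseteq> {0..<n}"
  unfolding largest_def by auto

lemma bilin:
  fixes A :: "nat \<Rightarrow> nat \<Rightarrow> real"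
  shows "(\<Sum>i\<in>S. v i * (\<Sum>j\<in>T. (\<Sum>r\<in>R. A r i * A r j) * w j))
       = (\<Sum>r\<in>R. (\<Sum>i\<in>S. A r i * v i) * (\<Sum>j\<in>T. A r j * w j))"
proof -
  have "(\<Sum>i\<in>S. v i * (\<Sum>j\<in>T. (\<Sum>r\<in>R. A r i * A r j) * w j))
      = (\<Sum>i\<in>S. \<Sum>j\<in>T. \<Sum>r\<in>R. v i * A r i * A r j * w j)"
    by (simp add: sum_distrib_left sum_distrib_right mult_ac)
  also have "\<dots> = (\<Sum>i\<in>S. \<Sum>r\<in>R. \<Sum>j\<in>T. v i * A r i * A r j * w j)"
    by (intro sum.cong refl sum.swap)
  also have "\<dots> = (\<Sum>r\<in>R. \<Sum>i\<in>S. \<Sum>j\<in>T. v i * A r i * A r j * w j)"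
    by (rule sum.swap)
  also have "\<dots> = (\<Sum>r\<in>R. \<Sum>i\<in>S. \<Sum>j\<in>T. (A r i * v i) * (A r j * w j))"
    by (simp add: mult_ac)
  also have "\<dots> = (\<Sum>r\<in>R. (\<Sum>i\<in>S. A r i * v i) * (\<Sum>j\<in>T. A r j * w j))"
    by (simp add: sum_product)
  finally show ?thesis .
qed

lemma rip_inner:
  fixes A :: "nat \<Rightarrow> nat \<Rightarrow> real" and d w :: "nat \<Rightarrow> real"
  assumes dw: "\<And>i. d i = 0 \<or> w i = 0"
    and cd: "card ({i\<in>{0..<n}. d i \<noteq> 0} \<union> {i\<in>{0..<n}. w i \<noteq> 0}) \<le> l"
  shows "(\<Sum>r\<in>{0..<m}. (\<Sum>j\<in>{0..<n}. A r j * d j) * (\<Sum>j\<in>{0..<n}. A r j * w j))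
         \<le> rip_const m n A l * vnorm {0..<n} d * vnorm {0..<n} w"
proof -
  define \<delta> where "\<delta> = rip_const m n A l"
  define a where "a = vnorm {0..<n} w"
  define b where "b = vnorm {0..<n} d"
  define I where "I = (\<Sum>r\<in>{0..<m}. (\<Sum>j\<in>{0..<n}. A r j * d j) * (\<Sum>j\<in>{0..<n}. A r j * w j))"
  have a0: "a \<ge> 0" and b0: "b \<ge> 0" by (auto simp: a_def b_def vnorm_nonneg)
  have a2: "a\<^sup>2 = (\<Sum>i\<in>{0..<n}. (w i)\<^sup>2)" by (simp add: a_def vnorm_sq)
  have b2: "b\<^sup>2 = (\<Sum>i\<in>{0..<n}. (d i)\<^sup>2)" by (simp add: b_def vnorm_sq)
  show ?thesis
  proof (cases "a = 0 \<or> b = 0")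
    case True
    then have "(\<forall>i\<in>{0..<n}. w i = 0) \<or> (\<forall>i\<in>{0..<n}. d i = 0)"
      using a2 b2 by (auto simp: sum_nonneg_eq_0_iff)
    then have "I = 0" unfolding I_def by auto
    then show ?thesis using True unfolding I_def a_def b_def by auto
  next
    case False
    with a0 b0 have ab: "a > 0" "b > 0" by auto
    define p where "p = (\<lambda>i. a * d i + b * w i)"
    define q where "q = (\<lambda>i. a * d i - b * w i)"
    have cp: "card {i\<in>{0..<n}. p i \<noteq> 0} \<le> l"
      by (rule le_trans[OF card_mono cd]) (auto simp: p_def)
    have cq: "card {i\<in>{0..<n}. q i \<noteq> 0} \<le> l"
      by (rule le_trans[OF card_mono cd]) (auto simp: q_def)
    have sqp: "(\<Sum>i\<in>{0..<n}. (p i)\<^sup>2) = a\<^sup>2 * b\<^sup>2 + b\<^sup>2 * a\<^sup>2"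
    proof -
      have "(\<Sum>i\<in>{0..<n}. (p i)\<^sup>2) = (\<Sum>i\<in>{0..<n}. a\<^sup>2 * (d i)\<^sup>2 + b\<^sup>2 * (w i)\<^sup>2)"
        by (intro sum.cong refl) (use dw in \<open>auto simp: p_def power2_eq_square algebra_simps\<close>)
      then show ?thesis by (simp add: sum.distrib sum_distrib_left a2 b2)
    qed
    have sqq: "(\<Sum>i\<in>{0..<n}. (q i)\<^sup>2) = a\<^sup>2 * b\<^sup>2 + b\<^sup>2 * a\<^sup>2"
    proof -
      have "(\<Sum>i\<in>{0..<n}. (q i)\<^sup>2) = (\<Sum>i\<in>{0..<n}. a\<^sup>2 * (d i)\<^sup>2 + b\<^sup>2 * (w i)\<^sup>2)"
        by (intro sum.cong refl) (use dw in \<open>auto simp: q_def power2_eq_square algebra_simps\<close>)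
      then show ?thesis by (simp add: sum.distrib sum_distrib_left a2 b2)
    qed
    define Ad where "Ad = (\<lambda>r. \<Sum>j\<in>{0..<n}. A r j * d j)"
    define Aw where "Aw = (\<lambda>r. \<Sum>j\<in>{0..<n}. A r j * w j)"
    have Ap: "(\<Sum>j\<in>{0..<n}. A r j * p j) = a * Ad r + b * Aw r" for r
      by (simp add: p_def Ad_def Aw_def algebra_simps sum.distrib sum_distrib_left)
    have Aq: "(\<Sum>j\<in>{0..<n}. A r j * q j) = a * Ad r - b * Aw r" for r
      by (simp add: q_def Ad_def Aw_def algebra_simps sum_subtractf sum_distrib_left)
    have up: "(\<Sum>r\<in>{0..<m}. (a * Ad r + b * Aw r)\<^sup>2) \<le> (1 + \<delta>) * (2 * a\<^sup>2 * b\<^sup>2)"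
      using rip_prop[OF cp, of m A, unfolded mulvec_sq, unfolded vnorm_sq[OF finite_atLeastLessThan] Ap sqp]
      unfolding \<delta>_def by (simp add: mult_ac)
    have lo: "(1 - \<delta>) * (2 * a\<^sup>2 * b\<^sup>2) \<le> (\<Sum>r\<in>{0..<m}. (a * Ad r - b * Aw r)\<^sup>2)"
      using rip_prop[OF cq, of m A, unfolded mulvec_sq, unfolded vnorm_sq[OF finite_atLeastLessThan] Aq sqq]
      unfolding \<delta>_def by (simp add: mult_ac)
    have I_eq: "I = (\<Sum>r\<in>{0..<m}. Ad r * Aw r)" by (simp add: I_def Ad_def Aw_def)
    have diff: "(\<Sum>r\<in>{0..<m}. (a * Ad r + b * Aw r)\<^sup>2) - (\<Sum>r\<in>{0..<m}. (a * Ad r - b * Aw r)\<^sup>2) = 4 * a * b * I"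
      unfolding I_eq
      by (simp add: sum_subtractf[symmetric] sum_distrib_left power2_eq_square algebra_simps)
    have "4 * a * b * I \<le> 4 * a * b * (\<delta> * a * b)"
      using up lo diff by (simp add: algebra_simps power2_eq_square)
    then have "I \<le> \<delta> * a * b" using ab by simp
    then show ?thesis by (simp add: I_def \<delta>_def a_def b_def mult_ac)
  qed
qed



lemma row_swap:
  fixes A :: "nat \<Rightarrow> nat \<Rightarrow> real"
  shows "(\<Sum>j\<in>T. (\<Sum>r\<in>R. A r i * A r j) * w j) = (\<Sum>r\<in>R. A r i * (\<Sum>j\<in>T. A r j * w j))"
proof -
  have "(\<Sum>j\<in>T. (\<Sum>r\<in>R. A r i * A r j) * w j) = (\<Sum>j\<in>T. \<Sum>r\<in>R. A r i * (A r j * w j))"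
    by (simp add: sum_distrib_right sum_distrib_left mult_ac)
  also have "\<dots> = (\<Sum>r\<in>R. \<Sum>j\<in>T. A r i * (A r j * w j))" by (rule sum.swap)
  also have "\<dots> = (\<Sum>r\<in>R. A r i * (\<Sum>j\<in>T. A r j * w j))" by (simp add: sum_distrib_left)
  finally show ?thesis .
qed

lemma col_swap:
  fixes B :: "nat \<Rightarrow> real" and G :: "nat \<Rightarrow> nat \<Rightarrow> real"
  shows "(\<Sum>j\<in>T. B j * (\<Sum>r\<in>R. G j r * y r)) = (\<Sum>r\<in>R. (\<Sum>j\<in>T. B j * G j r) * y r)"
proof -
  have "(\<Sum>j\<in>T. B j * (\<Sum>r\<in>R. G j r * y r)) = (\<Sum>j\<in>T. \<Sum>r\<in>R. B j * G j r * y r)"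
    by (simp add: sum_distrib_left mult_ac)
  also have "\<dots> = (\<Sum>r\<in>R. \<Sum>j\<in>T. B j * G j r * y r)" by (rule sum.swap)
  also have "\<dots> = (\<Sum>r\<in>R. (\<Sum>j\<in>T. B j * G j r) * y r)" by (simp add: sum_distrib_right)
  finally show ?thesis .
qed

lemma sum_supp:
  fixes S :: "nat set" and n :: nat
  assumes "S \<subseteq> {0..<n}" "\<forall>i. i \<notin> S \<longrightarrow> v i = 0"
  shows "(\<Sum>j\<in>{0..<n}. f j * v j) = (\<Sum>j\<in>S. f j * (v j::real))"
  using assms by (intro sum.mono_neutral_right) auto

theorem lemmaC10:
  fixes m n k :: nat and A :: "nat \<Rightarrow> nat \<Rightarrow> real"
    and xstar e y X0 :: "nat \<Rightarrow> real" and \<eta> :: real and t :: nat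
  assumes "m > 0" "n > 0" "k > 0"
    and "2 * k + 1 \<le> n"
    and "rip_const m n A (2 * k + 1) < 1"
    and "card {i\<in>{0..<n}. xstar i \<noteq> 0} \<le> k"
    and "\<forall>r\<in>{0..<m}. y r = (\<Sum>j\<in>{0..<n}. A r j * xstar j) + e r"
    and "\<eta> > 0"
  shows "let X = sea_X m n k A y \<eta> X0 t;
             S = sea_S n k X;
             x = sea_x m n k A y X;
             Sstar = {i\<in>{0..<n}. xstar i \<noteq> 0};
             u = (\<lambda>i. if i \<in> Sstar - S then - \<eta> * xstar i else 0)
         in vnorm S (\<lambda>i. x i - xstar i)
            \<le> rip_const m n A (2 * k) / (1 - rip_const m n A k) * (vnorm {0..<n} u / \<eta>)
              + sqrt (1 + rip_const m n A k) / (1 - rip_const m n A k) * vnorm {0..<m} e"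
proof -
  note rip = assms(5) and cardSs = assms(6) and yeq = assms(7) and eta = assms(8)
  define X where "X = sea_X m n k A y \<eta> X0 t"
  define S where "S = sea_S n k X"
  define x where "x = sea_x m n k A y X"
  define Ss where "Ss = {i\<in>{0..<n}. xstar i \<noteq> 0}"
  define u where "u = (\<lambda>i. if i \<in> Ss - S then - \<eta> * xstar i else 0)"
  define G where "G = pinv {0..<m} S (mrestrict {0..<m} S A)"
  define dk where "dk = rip_const m n A k"
  define d2k where "d2k = rip_const m n A (2 * k)"
  have Ssub: "S \<subseteq> {0..<n}" unfolding S_def sea_S_def by (rule largest_sub)
  have cardS: "card S \<le> k" unfolding S_def sea_S_def by (rule card_largest)
  have finS: "finite S" using Ssub finite_subset by blast
  have xdef: "x = (\<lambda>j. if j \<in> S then (\<Sum>r\<in>{0..<m}. G j r * y r) else 0)"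
    unfolding x_def sea_x_def G_def S_def mulvec_def Let_def by simp
  have xS: "\<forall>i. i \<notin> S \<longrightarrow> x i = 0" by (simp add: xdef)
  have dk1: "dk < 1" using rip_mono[of k "2 * k + 1" m n A] rip unfolding dk_def by simp
  have dk0: "dk \<ge> 0" and d2k0: "d2k \<ge> 0" unfolding dk_def d2k_def by (auto intro: rip_nonneg)
  have ripk: "(1 - dk) * (\<Sum>i\<in>{0..<n}. (v i)\<^sup>2) \<le> (\<Sum>r\<in>{0..<m}. (\<Sum>j\<in>{0..<n}. A r j * v j)\<^sup>2) \<and>
              (\<Sum>r\<in>{0..<m}. (\<Sum>j\<in>{0..<n}. A r j * v j)\<^sup>2) \<le> (1 + dk) * (\<Sum>i\<in>{0..<n}. (v i)\<^sup>2)"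
    if v0: "\<forall>i. i \<notin> S \<longrightarrow> v i = 0" for v
  proof -
    have "card {i\<in>{0..<n}. v i \<noteq> 0} \<le> card S"
      using v0 finS by (intro card_mono) auto
    with cardS have "card {i\<in>{0..<n}. v i \<noteq> 0} \<le> k" by simp
    from rip_prop[OF this, of m A] show ?thesis
      unfolding mulvec_sq unfolding vnorm_sq[OF finite_atLeastLessThan] dk_def .
  qed
  have injB: "v = 0" if v0: "\<forall>i. i \<notin> S \<longrightarrow> v i = 0"
      and Bv: "\<forall>i\<in>S. (\<Sum>j\<in>S. (\<Sum>r\<in>{0..<m}. A r i * A r j) * v j) = 0" for v
  proof -
    have "(\<Sum>i\<in>S. v i * (\<Sum>j\<in>S. (\<Sum>r\<in>{0..<m}. A r i * A r j) * v j)) = 0"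
      using Bv by simp
    then have "(\<Sum>r\<in>{0..<m}. (\<Sum>i\<in>S. A r i * v i) * (\<Sum>j\<in>S. A r j * v j)) = 0"
      unfolding bilin .
    then have "(\<Sum>r\<in>{0..<m}. (\<Sum>j\<in>{0..<n}. A r j * v j)\<^sup>2) = 0"
      using sum_supp[OF Ssub v0] by (simp add: power2_eq_square)
    with ripk[OF v0] have "(1 - dk) * (\<Sum>i\<in>{0..<n}. (v i)\<^sup>2) \<le> 0" by simp
    with dk1 have "(\<Sum>i\<in>{0..<n}. (v i)\<^sup>2) \<le> 0"
      by (simp add: mult_le_0_iff)
    then have "(\<Sum>i\<in>{0..<n}. (v i)\<^sup>2) = 0" by (simp add: antisym sum_nonneg)
    then have "\<forall>i\<in>{0..<n}. v i = 0" by (simp add: sum_nonneg_eq_0_iff)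
    with v0 Ssub show "v = 0" by (auto simp: fun_eq_iff)
  qed
  have BG: "\<forall>i\<in>S. \<forall>r\<in>{0..<m}. (\<Sum>j\<in>S. (\<Sum>r'\<in>{0..<m}. A r' i * A r' j) * G j r) = A r i"
    unfolding G_def by (rule pinv_BG[OF finite_atLeastLessThan finS]) (use injB in blast)
  have NE: "(\<Sum>r\<in>{0..<m}. A r i * (\<Sum>j\<in>{0..<n}. A r j * x j)) = (\<Sum>r\<in>{0..<m}. A r i * y r)"
    if i: "i \<in> S" for i
  proof -
    have "(\<Sum>r\<in>{0..<m}. A r i * (\<Sum>j\<in>{0..<n}. A r j * x j))
        = (\<Sum>r\<in>{0..<m}. A r i * (\<Sum>j\<in>S. A r j * x j))"
      using sum_supp[OF Ssub xS] by simp
    also have "\<dots> = (\<Sum>j\<in>S. (\<Sum>r\<in>{0..<m}. A r i * A r j) * x j)"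
      by (rule row_swap[symmetric])
    also have "\<dots> = (\<Sum>j\<in>S. (\<Sum>r\<in>{0..<m}. A r i * A r j) * (\<Sum>r\<in>{0..<m}. G j r * y r))"
      by (intro sum.cong refl) (simp add: xdef)
    also have "\<dots> = (\<Sum>r\<in>{0..<m}. (\<Sum>j\<in>S. (\<Sum>r'\<in>{0..<m}. A r' i * A r' j) * G j r) * y r)"
      by (rule col_swap)
    also have "\<dots> = (\<Sum>r\<in>{0..<m}. A r i * y r)"
      using BG i by (intro sum.cong refl) simp
    finally show ?thesis .
  qed
  define d where "d = (\<lambda>i. if i \<in> S then x i - xstar i else 0)"
  define w where "w = (\<lambda>i. if i \<in> Ss - S then xstar i else 0)"
  define Ad where "Ad = (\<lambda>r. \<Sum>j\<in>{0..<n}. A r j * d j)"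
  define Aw where "Aw = (\<lambda>r. \<Sum>j\<in>{0..<n}. A r j * w j)"
  have dS: "\<forall>i. i \<notin> S \<longrightarrow> d i = 0" by (simp add: d_def)
  have xd: "x j - xstar j = d j - w j" if "j \<in> {0..<n}" for j
    using that xS by (auto simp: d_def w_def Ss_def)
  have g: "(\<Sum>j\<in>{0..<n}. A r j * x j) - y r = Ad r - Aw r - e r" if r: "r \<in> {0..<m}" for r
  proof -
    have "(\<Sum>j\<in>{0..<n}. A r j * x j) - y r
        = (\<Sum>j\<in>{0..<n}. A r j * x j) - (\<Sum>j\<in>{0..<n}. A r j * xstar j) - e r"
      using yeq r by simp
    also have "(\<Sum>j\<in>{0..<n}. A r j * x j) - (\<Sum>j\<in>{0..<n}. A r j * xstar j)
        = (\<Sum>j\<in>{0..<n}. A r j * (x j - xstar j))"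
      by (simp add: sum_subtractf right_diff_distrib)
    also have "\<dots> = (\<Sum>j\<in>{0..<n}. A r j * d j - A r j * w j)"
      using xd by (intro sum.cong refl) (simp add: right_diff_distrib)
    also have "\<dots> = Ad r - Aw r" by (simp add: sum_subtractf Ad_def Aw_def)
    finally show ?thesis .
  qed
  have orth: "(\<Sum>r\<in>{0..<m}. Ad r * (Ad r - Aw r - e r)) = 0"
  proof -
    have "(\<Sum>r\<in>{0..<m}. Ad r * (Ad r - Aw r - e r))
        = (\<Sum>r\<in>{0..<m}. (\<Sum>i\<in>S. A r i * d i) * ((\<Sum>j\<in>{0..<n}. A r j * x j) - y r))"
      using g sum_supp[OF Ssub dS] by (intro sum.cong refl) (simp add: Ad_def)
    also have "\<dots> = (\<Sum>i\<in>S. d i * (\<Sum>r\<in>{0..<m}. A r i * ((\<Sum>j\<in>{0..<n}. A r j * x j) - y r)))"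
      by (simp add: sum_distrib_left sum_distrib_right mult_ac sum.swap[of _ "{0..<m}" S])
    also have "\<dots> = 0"
      using NE by (simp add: right_diff_distrib sum_subtractf)
    finally show ?thesis .
  qed
  define I1 where "I1 = (\<Sum>r\<in>{0..<m}. Ad r * Aw r)"
  define I2 where "I2 = (\<Sum>r\<in>{0..<m}. Ad r * e r)"
  define SA where "SA = (\<Sum>r\<in>{0..<m}. (Ad r)\<^sup>2)"
  define ND where "ND = vnorm {0..<n} d"
  define NW where "NW = vnorm {0..<n} w"
  define NE where "NE = vnorm {0..<m} e"
  have split: "SA = I1 + I2"
    using orth unfolding SA_def I1_def I2_def
    by (simp add: power2_eq_square right_diff_distrib sum_subtractf)
  have SA0: "SA \<ge> 0" unfolding SA_def by (simp add: sum_nonneg)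
  have ND0: "ND \<ge> 0" and NW0: "NW \<ge> 0" and NE0: "NE \<ge> 0" by (auto simp: ND_def NW_def NE_def vnorm_nonneg)
  have ND2: "ND\<^sup>2 = (\<Sum>i\<in>{0..<n}. (d i)\<^sup>2)" by (simp add: ND_def vnorm_sq)
  have NE2: "NE\<^sup>2 = (\<Sum>r\<in>{0..<m}. (e r)\<^sup>2)" by (simp add: NE_def vnorm_sq)
  have SAlo: "(1 - dk) * ND\<^sup>2 \<le> SA" and SAup: "SA \<le> (1 + dk) * ND\<^sup>2"
    using ripk[OF dS] unfolding ND2 SA_def Ad_def by auto
  have I1b: "I1 \<le> d2k * ND * NW"
  proof -
    have "card ({i\<in>{0..<n}. d i \<noteq> 0} \<union> {i\<in>{0..<n}. w i \<noteq> 0}) \<le> card (S \<union> Ss)"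
      using finS by (intro card_mono) (auto simp: d_def w_def Ss_def)
    also have "\<dots> \<le> card S + card Ss" by (rule card_Un_le)
    also have "\<dots> \<le> 2 * k" using cardS cardSs by (simp add: Ss_def)
    finally have c: "card ({i\<in>{0..<n}. d i \<noteq> 0} \<union> {i\<in>{0..<n}. w i \<noteq> 0}) \<le> 2 * k" .
    have dw: "d i = 0 \<or> w i = 0" for i by (simp add: d_def w_def)
    from rip_inner[OF dw c, where m=m and A=A] show ?thesis
      unfolding I1_def Ad_def Aw_def d2k_def ND_def NW_def .
  qed
  have NAd: "sqrt SA \<le> sqrt (1 + dk) * ND"
  proof -
    have "sqrt SA \<le> sqrt ((1 + dk) * ND\<^sup>2)" using SAup by simp
    also have "\<dots> = sqrt (1 + dk) * ND" using ND0 by (simp add: real_sqrt_mult)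
    finally show ?thesis .
  qed
  have I2b: "I2 \<le> sqrt SA * NE"
  proof -
    have "I2\<^sup>2 \<le> SA * NE\<^sup>2" unfolding I2_def SA_def NE2 by (rule Cauchy_Schwarz_ineq_sum)
    also have "\<dots> = (sqrt SA * NE)\<^sup>2" using SA0 by (simp add: power_mult_distrib)
    finally have "I2\<^sup>2 \<le> (sqrt SA * NE)\<^sup>2" .
    moreover have "0 \<le> sqrt SA * NE" using NE0 SA0 by simp
    ultimately show ?thesis by (rule power2_le_imp_le)
  qed
  have I2b': "I2 \<le> sqrt (1 + dk) * ND * NE"
  proof -
    have "sqrt SA * NE \<le> sqrt (1 + dk) * ND * NE" by (rule mult_right_mono[OF NAd NE0])
    with I2b show ?thesis by linarith
  qed
  have key: "(1 - dk) * ND * ND \<le> (d2k * NW + sqrt (1 + dk) * NE) * ND"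
    using SAlo split I1b I2b' by (simp add: power2_eq_square algebra_simps)
  have key2: "(1 - dk) * ND \<le> d2k * NW + sqrt (1 + dk) * NE"
  proof (cases "ND = 0")
    case True
    then show ?thesis using d2k0 NW0 NE0 dk0 by (simp add: add_nonneg_nonneg)
  next
    case False
    with ND0 have "ND > 0" by simp
    with key show ?thesis by (simp add: mult_le_cancel_right)
  qed
  have final: "ND \<le> d2k / (1 - dk) * NW + sqrt (1 + dk) / (1 - dk) * NE"
  proof -
    have "ND \<le> (d2k * NW + sqrt (1 + dk) * NE) / (1 - dk)"
      using key2 dk1 by (simp add: pos_le_divide_eq mult.commute)
    then show ?thesis by (simp add: add_divide_distrib)
  qed
  have LHS: "vnorm S (\<lambda>i. x i - xstar i) = ND"
  proof -
    have "(\<Sum>i\<in>{0..<n}. (d i)\<^sup>2) = (\<Sum>i\<in>S. (d i)\<^sup>2)"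
      using Ssub dS by (intro sum.mono_neutral_right) auto
    also have "\<dots> = (\<Sum>i\<in>S. (x i - xstar i)\<^sup>2)" by (intro sum.cong refl) (simp add: d_def)
    finally show ?thesis unfolding ND_def vnorm_def by simp
  qed
  have RHSu: "vnorm {0..<n} u / \<eta> = NW"
  proof -
    have "(\<Sum>i\<in>{0..<n}. (u i)\<^sup>2) = \<eta>\<^sup>2 * (\<Sum>i\<in>{0..<n}. (w i)\<^sup>2)"
      by (simp add: sum_distrib_left) (intro sum.cong refl, simp add: u_def w_def power2_eq_square)
    then have "vnorm {0..<n} u = \<eta> * NW"
      using eta unfolding vnorm_def NW_def by (simp add: real_sqrt_mult)
    then show ?thesis using eta by simp
  qed
  have "vnorm S (\<lambda>i. x i - xstar i)
     \<le> d2k / (1 - dk) * (vnorm {0..<n} u / \<eta>) + sqrt (1 + dk) / (1 - dk) * vnorm {0..<m} e"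
    unfolding LHS RHSu NE_def[symmetric] by (rule final)
  then show ?thesis
    unfolding Let_def X_def[symmetric] S_def[symmetric] x_def[symmetric] Ss_def[symmetric] u_def[symmetric]
      dk_def d2k_def .
qed


end
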